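(* For every caterpillar $T$, \[U_T(x_1=0,x_2,x_3,\ldots)=U^L_T(x_1=0,x_2,x_3,\ldots).\] Furthermore, if $T$ is proper, then $U^L_T(\mathbf{x})$ does not depend on $x_1$; in particular, in that case $U^L_T$ is an evaluation of the $U$-polynomial of $T$ (namely $U^L_T(\mathbf{x})=U_T(0,x_2,x_3,\ldots)$).
   Context: Let $\mathbf{x}=x_1,x_2,\ldots$ be commuting indeterminates; for a partition $\lambda=\lambda_1\lambda_2\cdots\lambda_l$ put $\mathbf{x}_\lambda=x_{\lambda_1}\cdots x_{\lambda_l}$. For a tree $T=(V,E)$ and $A\subseteq E$, let $T|_A$ be the spanning subgraph $(V,A)$ and $\lambda(A)$ the partition of $|V|$ formed by the sizes of the connected components of $T|_A$. The $U$-polynomial of the tree $T$ is $U_T(\mathbf{x})=\sum_{A\subseteq E}\mathbf{x}_{\lambda(A)}$. A caterpillar is a tree in which the subgraph induced by the internal (non-leaf) vertices is a non-trivial path, the spine; $P(T)$ denotes the set of spine edges and $L(T)=E\setminus P(T)$ the set of leaf-edges. A caterpillar is proper if every internal vertex is adjacent to at least one leaf. The restricted weighted polynomial is $U^L_T(\mathbf{x})=\sum_{A\subseteq E,\ L(T)\subseteq A}\mathbf{x}_{\lambda(A)}$. *)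

theory Defs
  imports Main
begin

text \<open>Graphs: finite vertex set V, edges are 2-element subsets of V.\<close>

definition edge_rel :: "'a set set \<Rightarrow> ('a \<times> 'a) set" where
  "edge_rel A = {(u, v). {u, v} \<in> A \<and> u \<noteq> v}"

definition components :: "'a set \<Rightarrow> 'a set set \<Rightarrow> 'a set set" where
  "components V A = V // ((edge_rel A)\<^sup>*)"

definition xmon :: "(nat \<Rightarrow> 'r::comm_ring_1) \<Rightarrow> 'a set \<Rightarrow> 'a set set \<Rightarrow> 'r" where
  "xmon x V A = (\<Prod>C\<in>components V A. x (card C))"

definition is_tree :: "'a set \<Rightarrow> 'a set set \<Rightarrow> bool" where
  "is_tree V E \<longleftrightarrow> finite V \<and> V \<noteq> {} \<and>
     E \<subseteq> {{u, v} | u v. u \<in> V \<and> v \<in> V \<and> u \<noteq> v} \<and>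
     components V E = {V} \<and> card E + 1 = card V"

definition degree :: "'a set set \<Rightarrow> 'a \<Rightarrow> nat" where
  "degree E v = card {e \<in> E. v \<in> e}"

definition internal_vertices :: "'a set \<Rightarrow> 'a set set \<Rightarrow> 'a set" where
  "internal_vertices V E = {v \<in> V. 2 \<le> degree E v}"

definition spine_edges :: "'a set \<Rightarrow> 'a set set \<Rightarrow> 'a set set" where
  "spine_edges V E = {e \<in> E. e \<subseteq> internal_vertices V E}"

definition leaf_edges :: "'a set \<Rightarrow> 'a set set \<Rightarrow> 'a set set" where
  "leaf_edges V E = E - spine_edges V E"

definition is_caterpillar :: "'a set \<Rightarrow> 'a set set \<Rightarrow> bool" where
  "is_caterpillar V E \<longleftrightarrow> is_tree V E \<and>
     (\<exists>vs. distinct vs \<and> 2 \<le> length vs \<and> set vs = internal_vertices V E \<and>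
        spine_edges V E = {{vs ! i, vs ! Suc i} | i. Suc i < length vs})"

definition proper_caterpillar :: "'a set \<Rightarrow> 'a set set \<Rightarrow> bool" where
  "proper_caterpillar V E \<longleftrightarrow> is_caterpillar V E \<and>
     (\<forall>v \<in> internal_vertices V E. \<exists>u. {u, v} \<in> E \<and> degree E u = 1)"

definition U_poly :: "'a set \<Rightarrow> 'a set set \<Rightarrow> (nat \<Rightarrow> 'r::comm_ring_1) \<Rightarrow> 'r" where
  "U_poly V E x = (\<Sum>A\<in>Pow E. xmon x V A)"

definition UL_poly :: "'a set \<Rightarrow> 'a set set \<Rightarrow> (nat \<Rightarrow> 'r::comm_ring_1) \<Rightarrow> 'r" where
  "UL_poly V E x = (\<Sum>A\<in>{A. A \<subseteq> E \<and> leaf_edges V E \<subseteq> A}. xmon x V A)"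

end

theory Submission
  imports Defs
begin

lemma comps_finite: "finite V \<Longrightarrow> finite (components V A)"
  unfolding components_def quotient_def by auto

lemma isolated_class:
  assumes "\<forall>e\<in>A. w \<notin> e"
  shows "((edge_rel A)\<^sup>*) `` {w} = {w}"
proof -
  have "z = w" if "(w, z) \<in> (edge_rel A)\<^sup>*" for z
    using that
    by (cases rule: converse_rtranclE) (use assms in \<open>auto simp: edge_rel_def\<close>)
  then show ?thesis by auto
qed

lemma part1:
  fixes x :: "nat \<Rightarrow> 'r::comm_ring_1"
  assumes "is_tree V E" and x1: "x 1 = 0"
  shows "U_poly V E x = UL_poly V E x"
proof -
  have fV: "finite V" using assms(1) unfolding is_tree_def by auto
  have Esub: "E \<subseteq> Pow V" using assms(1) unfolding is_tree_def by auto
  have fE: "finite E" using Esub fV by (meson finite_Pow_iff finite_subset)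
  have zero: "xmon x V A = 0" if "A \<in> Pow E - {A. A \<subseteq> E \<and> leaf_edges V E \<subseteq> A}" for A
  proof -
    from that obtain e where eA: "e \<notin> A" and eL: "e \<in> leaf_edges V E" and AE: "A \<subseteq> E" by auto
    have eE: "e \<in> E" and ns: "\<not> e \<subseteq> internal_vertices V E"
      using eL unfolding leaf_edges_def spine_edges_def by auto
    then obtain w where we: "w \<in> e" and wi: "w \<notin> internal_vertices V E" by auto
    have wV: "w \<in> V" using eE we Esub by auto
    have dg: "degree E w < 2" using wi wV unfolding internal_vertices_def by auto
    have only: "\<forall>e'\<in>E. w \<in> e' \<longrightarrow> e' = e"
    proof (rule ccontr)
      assume "\<not> ?thesis"
      then obtain e' where "e' \<in> E" "w \<in> e'" "e' \<noteq> e" by auto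
      then have "{e, e'} \<subseteq> {e \<in> E. w \<in> e}" using eE we by auto
      moreover have "finite {e \<in> E. w \<in> e}" using fE by auto
      ultimately have "card {e, e'} \<le> degree E w" unfolding degree_def by (rule card_mono[rotated])
      with \<open>e' \<noteq> e\<close> dg show False by simp
    qed
    have "\<forall>e'\<in>A. w \<notin> e'" using only AE eA by auto
    then have cl: "((edge_rel A)\<^sup>*) `` {w} = {w}" by (rule isolated_class)
    have "{w} \<in> components V A"
      unfolding components_def using quotientI[OF wV, of "(edge_rel A)\<^sup>*"] cl by simp
    then show ?thesis unfolding xmon_def
      using comps_finite[OF fV] x1 by (intro prod_zero) (auto intro!: bexI[where x="{w}"])
  qed
  show ?thesis unfolding U_poly_def UL_poly_def
    by (rule sum.mono_neutral_right) (use fE zero in auto)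
qed

lemma part2:
  assumes pc: "proper_caterpillar V E" and AE: "A \<subseteq> E" and LA: "leaf_edges V E \<subseteq> A"
    and C: "C \<in> components V A"
  shows "card C \<noteq> 1"
proof -
  have cat: "is_caterpillar V E" using pc unfolding proper_caterpillar_def by auto
  then have tr: "is_tree V E" unfolding is_caterpillar_def by auto
  have fV: "finite V" using tr unfolding is_tree_def by auto
  have Esub: "E \<subseteq> {{u, v} | u v. u \<in> V \<and> v \<in> V \<and> u \<noteq> v}" using tr unfolding is_tree_def by auto
  obtain vs where vs: "distinct vs" "2 \<le> length vs" "set vs = internal_vertices V E"
    using cat unfolding is_caterpillar_def by auto
  have intV: "internal_vertices V E \<subseteq> V" unfolding internal_vertices_def by auto
  obtain v where vV: "v \<in> V" and Cv: "C = ((edge_rel A)\<^sup>*) `` {v}"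
    using C unfolding components_def by (auto elim: quotientE)
  have "\<exists>e\<in>A. v \<in> e"
  proof (cases "v \<in> internal_vertices V E")
    case True
    then obtain u where uv: "{u, v} \<in> E" "degree E u = 1"
      using pc unfolding proper_caterpillar_def by auto
    have "u \<notin> internal_vertices V E" using uv(2) unfolding internal_vertices_def by auto
    then have "{u, v} \<in> leaf_edges V E" using uv(1)
      unfolding leaf_edges_def spine_edges_def by auto
    then show ?thesis using LA by auto
  next
    case False
    obtain w where wi: "w \<in> internal_vertices V E"
      using vs by (metis length_greater_0_conv less_le_trans zero_less_numeral nth_mem)
    have wv: "w \<noteq> v" using wi False by auto
    have wV: "w \<in> V" using wi intV by auto
    have "((edge_rel E)\<^sup>*) `` {v} \<in> components V E"
      unfolding components_def by (rule quotientI[OF vV])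
    then have "((edge_rel E)\<^sup>*) `` {v} = V" using tr unfolding is_tree_def by auto
    then have "(v, w) \<in> (edge_rel E)\<^sup>*" using wV by auto
    then obtain z where "(v, z) \<in> edge_rel E"
      using wv by (cases rule: converse_rtranclE) auto
    then have vz: "{v, z} \<in> E" unfolding edge_rel_def by auto
    then have "{v, z} \<in> leaf_edges V E" using False
      unfolding leaf_edges_def spine_edges_def by auto
    then show ?thesis using LA by auto
  qed
  then obtain e where eA: "e \<in> A" and ve: "v \<in> e" by auto
  then obtain a b where ab: "e = {a, b}" "a \<noteq> b" using AE Esub by blast
  then obtain z where ez: "e = {v, z}" "z \<noteq> v" using ve by auto
  have "(v, z) \<in> edge_rel A" using eA ez unfolding edge_rel_def by auto
  then have "{v, z} \<subseteq> C" using Cv by auto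
  moreover have "C \<subseteq> V"
  proof
    fix c assume "c \<in> C"
    then have "(v, c) \<in> (edge_rel A)\<^sup>*" using Cv by auto
    then show "c \<in> V"
    proof (induction rule: rtrancl_induct)
      case base show ?case by (rule vV)
    next
      case (step y c)
      then have "{y, c} \<in> A" unfolding edge_rel_def by auto
      then have "{y, c} \<in> {{u, v} | u v. u \<in> V \<and> v \<in> V \<and> u \<noteq> v}" using AE Esub by blast
      then show ?case by (smt (verit) doubleton_eq_iff insertI1 insert_commute mem_Collect_eq)
    qed
  qed
  ultimately show ?thesis
  proof (intro notI)
    assume "{v, z} \<subseteq> C" "C \<subseteq> V" "card C = 1"
    then obtain c where "C = {c}" using card_1_singletonE by blast
    with \<open>{v, z} \<subseteq> C\<close> ez(2) show False by auto
  qed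
qed

theorem proposition2p1:
  fixes V :: "'a set" and E :: "'a set set" and x :: "nat \<Rightarrow> 'r::comm_ring_1"
  assumes "is_caterpillar V E"
  shows "(x 1 = 0 \<longrightarrow> U_poly V E x = UL_poly V E x) \<and>
         (proper_caterpillar V E \<longrightarrow>
            (\<forall>y. (\<forall>i. i \<noteq> 1 \<longrightarrow> y i = x i) \<longrightarrow> UL_poly V E y = UL_poly V E x) \<and>
            UL_poly V E x = U_poly V E (x(1 := 0)))"
proof -
  have tr: "is_tree V E" using assms unfolding is_caterpillar_def by auto
  have P2: "UL_poly V E y = UL_poly V E x"
    if pc: "proper_caterpillar V E" and yx: "\<forall>i. i \<noteq> 1 \<longrightarrow> y i = x i"
    for y :: "nat \<Rightarrow> 'r"
    unfolding UL_poly_def xmon_def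
    by (intro sum.cong refl prod.cong) (use part2[OF pc] yx in auto)
  show ?thesis
  proof (intro conjI impI allI)
    show "U_poly V E x = UL_poly V E x" if "x 1 = 0" using part1[OF tr, of x] that by simp
  next
    fix y :: "nat \<Rightarrow> 'r"
    assume "proper_caterpillar V E" "\<forall>i. i \<noteq> 1 \<longrightarrow> y i = x i"
    then show "UL_poly V E y = UL_poly V E x" by (rule P2)
  next
    assume pc: "proper_caterpillar V E"
    have "UL_poly V E (x(1:=0)) = UL_poly V E x" by (rule P2[OF pc]) auto
    moreover have "U_poly V E (x(1:=0)) = UL_poly V E (x(1:=0))" by (rule part1[OF tr]) simp
    ultimately show "UL_poly V E x = U_poly V E (x(1 := 0))" by simp
  qed
qed

end
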